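(* For all terms $s,t$ and $m\in\mathbb N$: $s\Downarrow^m t$ holds if and only if $s\succ^\ast_m t$ and $t$ is an abstraction.
   Context: Terms (de Bruijn): $s::=n\mid st\mid\lambda s$, size $|n|=1+n$, $|\lambda s|=1+|s|$, $|st|=1+|s|+|t|$. Substitution $k^k_u=u$, $n^k_u=n$ ($n\ne k$), $(st)^k_u=(s^k_u)(t^k_u)$, $(\lambda s)^k_u=\lambda(s^{k+1}_u)$. Reduction: $(\lambda s)(\lambda t)\succ s^0_{\lambda t}$; $s\succ s'\Rightarrow st\succ s't$; $t\succ t'\Rightarrow(\lambda s)t\succ(\lambda s)t'$. $s\succ^\ast_m t$ means there is a reduction sequence $s=s_0\succ s_1\succ\cdots\succ s_j=t$ ($j\ge0$) with $\max_{0\le i\le j}|s_i|=m$. The big-step relation $s\Downarrow^m t$ is defined inductively: $\lambda s\Downarrow^{|\lambda s|}\lambda s$; and if $s\Downarrow^{m_1}\lambda s'$, $t\Downarrow^{m_2}\lambda t'$, $s'^0_{\lambda t'}\Downarrow^{m_3}u$ and $m=\max(1+m_1+|t|,\ 1+|\lambda s'|+m_2,\ m_3)$, then $st\Downarrow^m u$. *)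

theory Defs
  imports Main
begin

datatype tm = Var nat | App "tm" "tm" | Lam "tm"

fun tsize :: "tm \<Rightarrow> nat" where
  "tsize (Var n) = 1 + n"
| "tsize (Lam s) = 1 + tsize s"
| "tsize (App s t) = 1 + tsize s + tsize t"

fun subst :: "tm \<Rightarrow> nat \<Rightarrow> tm \<Rightarrow> tm" where
  "subst (Var n) k u = (if n = k then u else Var n)"
| "subst (App s t) k u = App (subst s k u) (subst t k u)"
| "subst (Lam s) k u = Lam (subst s (Suc k) u)"

inductive step :: "tm \<Rightarrow> tm \<Rightarrow> bool" where
  stepBeta: "step (App (Lam s) (Lam t)) (subst s 0 (Lam t))"
| stepAppL: "step s s' \<Longrightarrow> step (App s t) (App s' t)"
| stepAppR: "step t t' \<Longrightarrow> step (App (Lam s) t) (App (Lam s) t')"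

text \<open>s \<succ>*_m t: a reduction sequence s = s_0 \<succ> ... \<succ> s_j = t whose maximal term size is m.\<close>
definition redm :: "tm \<Rightarrow> nat \<Rightarrow> tm \<Rightarrow> bool" where
  "redm s m t \<longleftrightarrow> (\<exists>j f. f 0 = s \<and> f j = t \<and> (\<forall>i<j. step (f i) (f (Suc i)))
                        \<and> Max {tsize (f i) | i. i \<le> j} = m)"

definition is_abs :: "tm \<Rightarrow> bool" where
  "is_abs t \<longleftrightarrow> (\<exists>t'. t = Lam t')"

inductive eval :: "tm \<Rightarrow> nat \<Rightarrow> tm \<Rightarrow> bool" where
  evalLam: "eval (Lam s) (tsize (Lam s)) (Lam s)"
| evalApp: "eval s m1 (Lam s') \<Longrightarrow> eval t m2 (Lam t') \<Longrightarrow> eval (subst s' 0 (Lam t')) m3 u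
    \<Longrightarrow> m = max (1 + m1 + tsize t) (max (1 + tsize (Lam s') + m2) m3)
    \<Longrightarrow> eval (App s t) m u"

end

theory Submission
  imports Defs
begin

inductive redi :: "tm \<Rightarrow> nat \<Rightarrow> tm \<Rightarrow> bool" where
  rRefl: "redi t (tsize t) t"
| rStep: "step s s' \<Longrightarrow> redi s' m t \<Longrightarrow> redi s (max (tsize s) m) t"

lemma redi_ge: "redi s m t \<Longrightarrow> tsize s \<le> m \<and> tsize t \<le> m"
  by (induction rule: redi.induct) auto

lemma redi_trans: "redi s m1 t \<Longrightarrow> redi t m2 u \<Longrightarrow> redi s (max m1 m2) u"
proof (induction arbitrary: m2 u rule: redi.induct)
  case (rRefl t)
  then show ?case using redi_ge[OF rRefl.prems] by (simp add: max_absorb2)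
next
  case (rStep s s' m t)
  have "redi s (max (tsize s) (max m m2)) u" using rStep by (intro redi.rStep) auto
  then show ?case by (simp add: max.assoc)
qed

lemma redi_appL: "redi s m t \<Longrightarrow> redi (App s u) (1 + m + tsize u) (App t u)"
proof (induction rule: redi.induct)
  case (rRefl t)
  then show ?case using redi.rRefl[of "App t u"] by simp
next
  case (rStep s s' m t)
  have "redi (App s u) (max (tsize (App s u)) (1 + m + tsize u)) (App t u)"
    by (rule redi.rStep[OF stepAppL[OF rStep(1)] rStep.IH])
  moreover have "max (tsize (App s u)) (1 + m + tsize u) = 1 + max (tsize s) m + tsize u"
    by (simp add: max_def)
  ultimately show ?case by (simp only:)
qed

lemma redi_appR: "redi s m t \<Longrightarrow> redi (App (Lam a) s) (1 + tsize (Lam a) + m) (App (Lam a) t)"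
proof (induction rule: redi.induct)
  case (rRefl t)
  then show ?case using redi.rRefl[of "App (Lam a) t"] by simp
next
  case (rStep s s' m t)
  have "redi (App (Lam a) s) (max (tsize (App (Lam a) s)) (1 + tsize (Lam a) + m)) (App (Lam a) t)"
    by (rule redi.rStep[OF stepAppR[OF rStep(1)] rStep.IH])
  moreover have "max (tsize (App (Lam a) s)) (1 + tsize (Lam a) + m) = 1 + tsize (Lam a) + max (tsize s) m"
    by (simp add: max_def)
  ultimately show ?case by (simp only:)
qed

lemma eval_redi: "eval s m t \<Longrightarrow> redi s m t \<and> is_abs t"
proof (induction rule: eval.induct)
  case (evalLam s)
  show ?case using redi.rRefl[of "Lam s"] by (simp add: is_abs_def)
next
  case (evalApp s m1 s' t m2 t' m3 u m)
  have 1: "redi (App s t) (1 + m1 + tsize t) (App (Lam s') t)"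
    using evalApp redi_appL by blast
  have 2: "redi (App (Lam s') t) (1 + tsize (Lam s') + m2) (App (Lam s') (Lam t'))"
    using evalApp redi_appR by blast
  have g: "tsize (Lam t') \<le> m2" using evalApp redi_ge by blast
  have 3: "redi (App (Lam s') (Lam t')) (max (tsize (App (Lam s') (Lam t'))) m3) u"
    using redi.rStep[OF stepBeta] evalApp.IH(3) by blast
  have 4: "max (tsize (App (Lam s') (Lam t'))) m3 \<le> max (1 + tsize (Lam s') + m2) m3"
    using g by simp
  have "redi (App s t) (max (1 + m1 + tsize t) (max (1 + tsize (Lam s') + m2) (max (tsize (App (Lam s') (Lam t'))) m3))) u"
    using redi_trans[OF 1 redi_trans[OF 2 3]] .
  moreover have "max (1 + tsize (Lam s') + m2) (max (tsize (App (Lam s') (Lam t'))) m3)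
     = max (1 + tsize (Lam s') + m2) m3" using g by (simp add: max_def)
  ultimately show ?case using evalApp by simp
qed

lemma eval_ge: "eval s m t \<Longrightarrow> tsize s \<le> m"
  using eval_redi redi_ge by blast

lemma mx1: "max (1 + max (a::nat) b + c) X = max (1 + a + c) (max (1 + b + c) X)"
  by (simp add: max_def)
lemma mx2: "(u'::nat) \<le> m2 \<Longrightarrow> max (1 + L + u) (max (1 + L + max u m2) m3) = max (1 + L + u) (max (1 + L + u') (max (1 + L + m2) m3))"
  by (simp add: max_def)

lemma eval_expand: "step s s' \<Longrightarrow> eval s' m t \<Longrightarrow> eval s (max (tsize s) m) t"
proof (induction arbitrary: m t rule: step.induct)
  case (stepBeta a b)
  have "eval (App (Lam a) (Lam b)) (max (1 + tsize (Lam a) + tsize (Lam b)) (max (1 + tsize (Lam a) + tsize (Lam b)) m)) t"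
    by (rule evalApp[OF evalLam evalLam stepBeta.prems]) simp
  then show ?case by simp
next
  case (stepAppL s s' u)
  from stepAppL.prems obtain m1 a m2 b m3 where
    h: "eval s' m1 (Lam a)" "eval u m2 (Lam b)" "eval (subst a 0 (Lam b)) m3 t"
       "m = max (1 + m1 + tsize u) (max (1 + tsize (Lam a) + m2) m3)"
    by (cases rule: eval.cases) auto
  have e: "eval s (max (tsize s) m1) (Lam a)" using stepAppL.IH h(1) .
  have "eval (App s u) (max (1 + max (tsize s) m1 + tsize u) (max (1 + tsize (Lam a) + m2) m3)) t"
    by (rule evalApp[OF e h(2) h(3)]) simp
  moreover have "max (1 + max (tsize s) m1 + tsize u) (max (1 + tsize (Lam a) + m2) m3) = max (tsize (App s u)) m"
    by (simp only: mx1 h(4) tsize.simps(3))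
  ultimately show ?case by (simp only:)
next
  case (stepAppR u u' a)
  from stepAppR.prems obtain m1 a' m2 b m3 where
    h: "eval (Lam a) m1 (Lam a')" "eval u' m2 (Lam b)" "eval (subst a' 0 (Lam b)) m3 t"
       "m = max (1 + m1 + tsize u') (max (1 + tsize (Lam a') + m2) m3)"
    by (cases rule: eval.cases) auto
  have aa: "a' = a" "m1 = tsize (Lam a)" using h(1) by (cases rule: eval.cases; simp)+
  have e: "eval u (max (tsize u) m2) (Lam b)" using stepAppR.IH h(2) .
  have g: "tsize u' \<le> m2" using h(2) eval_ge by blast
  have "eval (App (Lam a) u) (max (1 + tsize (Lam a) + tsize u) (max (1 + tsize (Lam a) + max (tsize u) m2) m3)) t"
    by (rule evalApp[OF evalLam e h(3)[unfolded aa]]) simp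
  moreover have "max (1 + tsize (Lam a) + tsize u) (max (1 + tsize (Lam a) + max (tsize u) m2) m3) = max (tsize (App (Lam a) u)) m"
    by (simp only: mx2[OF g] h(4) aa tsize.simps(3))
  ultimately show ?case by (simp only:)
qed

lemma redi_eval: "redi s m t \<Longrightarrow> is_abs t \<Longrightarrow> eval s m t"
proof (induction rule: redi.induct)
  case (rRefl t)
  then show ?case by (auto simp: is_abs_def intro: evalLam)
next
  case (rStep s s' m t)
  then show ?case using eval_expand by blast
qed

lemma set_shift: "{tsize (f i) | i. i \<le> Suc j} = insert (tsize (f 0)) {tsize (f (Suc i)) | i. i \<le> j}"
proof -
  have "\<And>i. i \<le> Suc j \<Longrightarrow> i = 0 \<or> (\<exists>k. i = Suc k \<and> k \<le> j)"
    by (metis Suc_le_mono not0_implies_Suc)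
  then show ?thesis by auto
qed

lemma fin_set: "finite {tsize (f i) | i. i \<le> (j::nat)}"
  by simp

lemma redm_redi: "\<forall>f. (\<forall>i<j. step (f i) (f (Suc i))) \<longrightarrow> redi (f 0) (Max {tsize (f i) | i. i \<le> j}) (f j)"
proof (induction j)
  case 0
  then show ?case by (auto intro: rRefl)
next
  case (Suc j)
  show ?case
  proof (intro allI impI)
    fix f :: "nat \<Rightarrow> tm"
    assume a: "\<forall>i<Suc j. step (f i) (f (Suc i))"
    have "redi ((f \<circ> Suc) 0) (Max {tsize ((f \<circ> Suc) i) | i. i \<le> j}) ((f \<circ> Suc) j)"
      using Suc.IH[rule_format, of "f o Suc"] a by auto
    then have r: "redi (f 1) (Max {tsize (f (Suc i)) | i. i \<le> j}) (f (Suc j))" by simp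
    have "redi (f 0) (max (tsize (f 0)) (Max {tsize (f (Suc i)) | i. i \<le> j})) (f (Suc j))"
      using a r redi.rStep[of "f 0" "f 1"] by simp
    moreover have "Max {tsize (f i) | i. i \<le> Suc j} = max (tsize (f 0)) (Max {tsize (f (Suc i)) | i. i \<le> j})"
      unfolding set_shift[of f j] by (subst Max_insert) auto
    ultimately show "redi (f 0) (Max {tsize (f i) | i. i \<le> Suc j}) (f (Suc j))" by simp
  qed
qed

lemma redi_redm: "redi s m t \<Longrightarrow> redm s m t"
proof (induction rule: redi.induct)
  case (rRefl t)
  show ?case unfolding redm_def by (rule exI[of _ 0], rule exI[of _ "\<lambda>_. t"]) auto
next
  case (rStep s s' m t)
  then obtain j f where f: "f 0 = s'" "f j = t" "\<forall>i<j. step (f i) (f (Suc i))"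
    "Max {tsize (f i) | i. i \<le> j} = m" unfolding redm_def by blast
  define g where "g i = (if i = 0 then s else f (i - 1))" for i
  have g0: "g 0 = s" by (simp add: g_def)
  have gS: "g (Suc i) = f i" for i by (simp add: g_def)
  have st: "\<forall>i<Suc j. step (g i) (g (Suc i))"
  proof (intro allI impI)
    fix i assume "i < Suc j"
    then show "step (g i) (g (Suc i))"
    proof (cases i)
      case 0
      then show ?thesis using f(1) rStep(1) g0 gS by simp
    next
      case (Suc k)
      then show ?thesis using f(3) \<open>i < Suc j\<close> gS by simp
    qed
  qed
  have "Max {tsize (g i) | i. i \<le> Suc j} = Max (insert (tsize s) {tsize (f i) | i. i \<le> j})"
    by (simp only: set_shift g0 gS)
  also have "\<dots> = max (tsize s) (Max {tsize (f i) | i. i \<le> j})"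
    by (rule Max_insert[OF fin_set]) blast
  finally have mx: "Max {tsize (g i) | i. i \<le> Suc j} = max (tsize s) m" using f(4) by simp
  have "g (Suc j) = t" using gS f(2) by simp
  then show ?case unfolding redm_def using g0 st mx by blast
qed

lemma redm_iff: "redm s m t \<longleftrightarrow> redi s m t"
proof
  assume "redm s m t"
  then obtain j f where f: "f 0 = s" "f j = t" "\<forall>i<j. step (f i) (f (Suc i))"
    "Max {tsize (f i) | i. i \<le> j} = m" unfolding redm_def by blast
  have "redi (f 0) (Max {tsize (f i) | i. i \<le> j}) (f j)"
    using redm_redi f(3) by blast
  then show "redi s m t" using f by simp
next
  assume "redi s m t"
  then show "redm s m t" by (rule redi_redm)
qed

theorem lemmaA4:
  fixes s t :: "tm" and m :: nat
  shows "eval s m t \<longleftrightarrow> redm s m t \<and> is_abs t"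
proof
  assume "eval s m t"
  then show "redm s m t \<and> is_abs t" using eval_redi redm_iff by blast
next
  assume "redm s m t \<and> is_abs t"
  then show "eval s m t" using redi_eval redm_iff by blast
qed

end
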